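(* Consider the following recursive procedure on input $(S,C,w)$, where $S$ is a path with vertex set $V$, $w:V\to\mathbb R_{\ge0}$, and $C$ is a partial coloring with domain $\mathrm{support}(w)=\{v:w(v)>0\}$: if $V\setminus\mathrm{support}(w)$ is a cover of $(S,C)$, return $X=V\setminus\mathrm{support}(w)$; otherwise choose $x,y,z\in\mathrm{support}(w)$ with $C(x)=C(z)\neq C(y)$ and $y$ between $x$ and $z$ on $S$, let $\varepsilon=\min\{w(x),w(y),w(z)\}$, let $w_1=w-\varepsilon\cdot\mathbf 1_{\{x,y,z\}}$, and return the output of the procedure on $(S,C|_{\mathrm{support}(w_1)},w_1)$. Then the procedure is well defined (whenever $V\setminus\mathrm{support}(w)$ is not a cover, such $x,y,z$ exist), terminates, and returns a cover $X$ of $(S,C)$ with $w(X)\le 3\,\mathrm{OPT}(S,C,w)$.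
   Context: A partial coloring of a tree (here a path) is convex if it can be extended to a total coloring in which every color class induces a connected subtree. A set $X\subseteq V$ is a cover of $(T,C)$ if the restriction of $C$ to $\mathrm{Domain}(C)\setminus X$ is convex. $w(X)=\sum_{v\in X}w(v)$, and $\mathrm{OPT}(T,C,w)$ is the minimum of $w(X)$ over all covers $X$ (equivalently the minimum cost of a convex recoloring). *)

theory Defs
  imports Complex_Main
begin

text \<open>The path S has vertex set V = {0..<n} with edges {i, i+1}.
  A partial colouring is a map C :: nat \<Rightarrow> 'c option; Domain(C) = dom C.\<close>

definition path_vertices :: "nat \<Rightarrow> nat set" where
  "path_vertices n = {..<n}"

definition total_convex :: "nat \<Rightarrow> (nat \<Rightarrow> 'c) \<Rightarrow> bool" where
  "total_convex n f \<longleftrightarrow>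
     (\<forall>c u v x. u < v \<and> v < x \<and> x < n \<and> f u = c \<and> f x = c \<longrightarrow> f v = c)"

definition convex_pc :: "nat \<Rightarrow> (nat \<Rightarrow> 'c option) \<Rightarrow> bool" where
  "convex_pc n C \<longleftrightarrow>
     (\<exists>f. (\<forall>v\<in>dom C. C v = Some (f v)) \<and> total_convex n f)"

definition is_cover :: "nat \<Rightarrow> (nat \<Rightarrow> 'c option) \<Rightarrow> nat set \<Rightarrow> bool" where
  "is_cover n C X \<longleftrightarrow> X \<subseteq> path_vertices n \<and> convex_pc n (C |` (dom C - X))"

definition OPT :: "nat \<Rightarrow> (nat \<Rightarrow> 'c option) \<Rightarrow> (nat \<Rightarrow> real) \<Rightarrow> real" where
  "OPT n C w = Min ((\<lambda>X. sum w X) ` {X. is_cover n C X})"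

definition supp :: "nat \<Rightarrow> (nat \<Rightarrow> real) \<Rightarrow> nat set" where
  "supp n w = {v \<in> path_vertices n. 0 < w v}"

definition between :: "nat \<Rightarrow> nat \<Rightarrow> nat \<Rightarrow> bool" where
  "between x y z \<longleftrightarrow> (x < y \<and> y < z) \<or> (z < y \<and> y < x)"

definition bad_triple ::
  "nat \<Rightarrow> (nat \<Rightarrow> 'c option) \<Rightarrow> (nat \<Rightarrow> real) \<Rightarrow> nat \<Rightarrow> nat \<Rightarrow> nat \<Rightarrow> bool" where
  "bad_triple n C w x y z \<longleftrightarrow>
     x \<in> supp n w \<and> y \<in> supp n w \<and> z \<in> supp n w \<and>
     C x = C z \<and> C x \<noteq> C y \<and> between x y z"

text \<open>One recursive step of the procedure: the current instance is (S, C|supp(w), w);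
  it is not yet solved and w is reduced on a chosen bad triple.\<close>
definition proc_step ::
  "nat \<Rightarrow> (nat \<Rightarrow> 'c option) \<Rightarrow> (nat \<Rightarrow> real) \<Rightarrow> (nat \<Rightarrow> real) \<Rightarrow> bool" where
  "proc_step n C w w' \<longleftrightarrow>
     \<not> is_cover n (C |` supp n w) (path_vertices n - supp n w) \<and>
     (\<exists>x y z. bad_triple n (C |` supp n w) w x y z \<and>
        (let \<epsilon> = Min {w x, w y, w z} in
          w' = (\<lambda>v. if v \<in> {x, y, z} then w v - \<epsilon> else w v)))"

text \<open>Possible outputs of the (nondeterministic) procedure on input (S, C|supp(w), w).\<close>
inductive proc_out ::
  "nat \<Rightarrow> (nat \<Rightarrow> 'c option) \<Rightarrow> (nat \<Rightarrow> real) \<Rightarrow> nat set \<Rightarrow> bool"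
  for n C where
  out_done: "is_cover n (C |` supp n w) (path_vertices n - supp n w)
         \<Longrightarrow> proc_out n C w (path_vertices n - supp n w)"
| out_step: "proc_step n C w w' \<Longrightarrow> proc_out n C w' X \<Longrightarrow> proc_out n C w X"

end

theory Submission
  imports Defs
begin

lemma step_unfold:
  assumes "proc_step n C w w'"
  shows "\<exists>x y z. bad_triple n (C |` supp n w) w x y z \<and>
     w' = (\<lambda>v. if v \<in> {x, y, z} then w v - Min {w x, w y, w z} else w v)"
  using assms unfolding proc_step_def Let_def by blast

lemma step_supp:
  assumes "proc_step n C w w'"
  shows "supp n w' \<subset> supp n w"
proof -
  obtain x y z where b: "bad_triple n (C |` supp n w) w x y z" and
    w': "w' = (\<lambda>v. if v \<in> {x, y, z} then w v - Min {w x, w y, w z} else w v)"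
    using step_unfold[OF assms] by blast
  have pos: "0 < w x" "0 < w y" "0 < w z" "x < n" "y < n" "z < n"
    using b unfolding bad_triple_def supp_def path_vertices_def by auto
  have sub: "supp n w' \<subseteq> supp n w"
    using pos unfolding supp_def w' by (auto simp: min_def split: if_splits)
  have "\<exists>v\<in>{x,y,z}. w' v = 0"
    unfolding w' by (auto simp: min_def)
  then obtain v where "v \<in> {x,y,z}" "w' v = 0" by blast
  hence "v \<in> supp n w" "v \<notin> supp n w'" using pos unfolding supp_def path_vertices_def by auto
  thus ?thesis using sub by blast
qed

lemma step_nonneg:
  assumes "proc_step n C w w'" "\<forall>v \<in> path_vertices n. 0 \<le> w v"
  shows "\<forall>v \<in> path_vertices n. 0 \<le> w' v"
proof -
  obtain x y z where
    w': "w' = (\<lambda>v. if v \<in> {x, y, z} then w v - Min {w x, w y, w z} else w v)"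
    using step_unfold[OF assms(1)] by blast
  show ?thesis using assms(2) unfolding w' by (auto simp: min_def)
qed

lemma finite_supp: "finite (supp n w)"
  unfolding supp_def path_vertices_def by auto

lemma no_bad_convex:
  fixes P :: "nat \<Rightarrow> 'c option"
  assumes domP: "dom P \<subseteq> {..<n}"
    and nb: "\<forall>x y z. x \<in> dom P \<and> y \<in> dom P \<and> z \<in> dom P \<and> x < y \<and> y < z \<and> P x = P z \<longrightarrow> P y = P x"
  shows "convex_pc n P"
proof (cases "dom P = {}")
  case True
  show ?thesis unfolding convex_pc_def total_convex_def
    by (rule exI[of _ "\<lambda>_. undefined"]) (use True in auto)
next
  case False
  define D where "D = dom P"
  have fin: "finite D" using domP D_def finite_subset by auto
  define p where "p v = (if \<exists>d\<in>D. d \<le> v then Max {d\<in>D. d \<le> v} else Min D)" for v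
  have pD: "p v \<in> D" for v
  proof (cases "\<exists>d\<in>D. d \<le> v")
    case True
    then have "Max {d\<in>D. d \<le> v} \<in> {d\<in>D. d \<le> v}" using fin by (intro Max_in) auto
    then show ?thesis using True p_def by auto
  next
    case f: False
    then show ?thesis using fin False D_def p_def by (auto intro: Min_in)
  qed
  have pid: "p d = d" if "d \<in> D" for d
  proof -
    have "Max {d'\<in>D. d' \<le> d} = d" using fin that by (intro Max_eqI) auto
    thus ?thesis using that p_def by auto
  qed
  have pmono: "p u \<le> p v" if "u \<le> v" for u v
  proof (cases "\<exists>d\<in>D. d \<le> u")
    case True
    then have T2: "\<exists>d\<in>D. d \<le> v" using that le_trans by blast
    have "Max {d\<in>D. d \<le> u} \<in> {d\<in>D. d \<le> u}" using fin True by (intro Max_in) auto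
    hence "Max {d\<in>D. d \<le> u} \<le> Max {d\<in>D. d \<le> v}" using fin that by (intro Max_ge) auto
    thus ?thesis using True T2 p_def by auto
  next
    case f: False
    then have "p u = Min D" using p_def by auto
    moreover have "Min D \<le> p v" using pD fin by auto
    ultimately show ?thesis by simp
  qed
  define f where "f v = the (P (p v))" for v
  have Pf: "P v = Some (f v)" if "v \<in> D" for v
    using that pid D_def f_def by auto
  have Pp: "P (p v) = Some (f v)" for v using pD[of v] D_def f_def by (metis domIff option.collapse)
  show ?thesis unfolding convex_pc_def
  proof (intro exI conjI)
    show "\<forall>v\<in>dom P. P v = Some (f v)" using Pf D_def by auto
    show "total_convex n f" unfolding total_convex_def
    proof (intro allI impI)
      fix c u v x assume a: "u < v \<and> v < x \<and> x < n \<and> f u = c \<and> f x = c"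
      have m1: "p u \<le> p v" "p v \<le> p x" using a pmono by auto
      show "f v = c"
      proof (cases "p u = p v \<or> p v = p x")
        case True
        then show ?thesis using a Pp by (metis option.inject)
      next
        case False
        hence "p u < p v" "p v < p x" using m1 by auto
        moreover have "P (p u) = P (p x)" using a Pp by simp
        ultimately have "P (p v) = P (p u)" using nb pD D_def by blast
        then show ?thesis using a Pp by simp
      qed
    qed
  qed
qed

lemma nocover_bad:
  assumes "\<not> is_cover n (C |` supp n w) (path_vertices n - supp n w)"
  shows "\<exists>x y z. bad_triple n (C |` supp n w) w x y z"
proof (rule ccontr)
  assume nb0: "\<not> ?thesis"
  define P where "P = (C |` supp n w) |` (dom (C |` supp n w) - (path_vertices n - supp n w))"
  have domP: "dom P \<subseteq> supp n w" unfolding P_def by auto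
  have agree: "P v = (C |` supp n w) v" if "v \<in> dom P" for v
    using that unfolding P_def by (auto simp: restrict_map_def split: if_splits)
  have "convex_pc n P"
  proof (rule no_bad_convex)
    show "dom P \<subseteq> {..<n}" using domP unfolding supp_def path_vertices_def by auto
    show "\<forall>x y z. x \<in> dom P \<and> y \<in> dom P \<and> z \<in> dom P \<and> x < y \<and> y < z \<and> P x = P z \<longrightarrow> P y = P x"
    proof (intro allI impI, rule ccontr)
      fix x y z assume a: "x \<in> dom P \<and> y \<in> dom P \<and> z \<in> dom P \<and> x < y \<and> y < z \<and> P x = P z"
        and ne: "P y \<noteq> P x"
      have e: "P x = (C |` supp n w) x" "P y = (C |` supp n w) y" "P z = (C |` supp n w) z"
        using a agree by blast+
      have s3: "x \<in> supp n w" "y \<in> supp n w" "z \<in> supp n w" using a domP by blast+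
      have c1: "(C |` supp n w) x = (C |` supp n w) z" using a e by simp
      have c2: "(C |` supp n w) x \<noteq> (C |` supp n w) y" using ne e by simp
      have "bad_triple n (C |` supp n w) w x y z"
        unfolding bad_triple_def between_def using s3 c1 c2 a by blast
      thus False using nb0 by blast
    qed
  qed
  thus False using assms unfolding is_cover_def P_def by auto
qed

lemma exists_out: "\<exists>X. proc_out n C w X"
proof (induction "card (supp n w)" arbitrary: w rule: less_induct)
  case less
  show ?case
  proof (cases "is_cover n (C |` supp n w) (path_vertices n - supp n w)")
    case True
    then show ?thesis using out_done by blast
  next
    case False
    then obtain x y z where b: "bad_triple n (C |` supp n w) w x y z" using nocover_bad by blast
    define w' where "w' = (\<lambda>v. if v \<in> {x, y, z} then w v - Min {w x, w y, w z} else w v)"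
    have st: "proc_step n C w w'" unfolding proc_step_def Let_def using False b w'_def by blast
    have "card (supp n w') < card (supp n w)"
      using step_supp[OF st] finite_supp psubset_card_mono by blast
    then obtain X where "proc_out n C w' X" using less by blast
    then show ?thesis using out_step st by blast
  qed
qed

lemma out_cover:
  assumes "proc_out n C w X" and dC: "dom C \<subseteq> path_vertices n"
  shows "is_cover n C X"
  using assms
proof induction
  case (out_done w)
  have e: "(C |` supp n w) |` (dom (C |` supp n w) - (path_vertices n - supp n w))
        = C |` (dom C - (path_vertices n - supp n w))"
    using dC by (intro ext) (auto simp: restrict_map_def supp_def)
  show ?case using out_done e unfolding is_cover_def by simp
next
  case (out_step w w' X)
  then show ?case by simp
qed

lemma cover_hits:
  assumes Y: "is_cover n C Y" and xyz: "x \<in> dom C" "y \<in> dom C" "z \<in> dom C"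
    and c: "C x = C z" "C x \<noteq> C y" and bt: "between x y z" and zn: "x < n" "z < n"
  shows "Y \<inter> {x, y, z} \<noteq> {}"
proof
  assume h: "Y \<inter> {x, y, z} = {}"
  obtain f where f: "\<forall>v\<in>dom (C |` (dom C - Y)). (C |` (dom C - Y)) v = Some (f v)"
    and tc: "total_convex n f"
    using Y unfolding is_cover_def convex_pc_def by blast 
  have g: "C v = Some (f v)" if "v \<in> dom C" "v \<notin> Y" for v
  proof -
    have "v \<in> dom (C |` (dom C - Y))" using that by simp
    hence "(C |` (dom C - Y)) v = Some (f v)" using f by blast
    thus ?thesis using that by simp
  qed
  have hx: "x \<notin> Y" "y \<notin> Y" "z \<notin> Y" using h by blast+
  have e1: "f x = f z" using g[OF xyz(1) hx(1)] g[OF xyz(3) hx(3)] c(1) by simp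
  have e2: "f y \<noteq> f x" using g[OF xyz(1) hx(1)] g[OF xyz(2) hx(2)] c(2) by simp
  have tc': "\<And>u v x. u < v \<Longrightarrow> v < x \<Longrightarrow> x < n \<Longrightarrow> f u = f x \<Longrightarrow> f v = f u"
  proof -
    fix u v x assume "u < v" "v < x" "x < n" "f u = f x"
    thus "f v = f u" using tc[unfolded total_convex_def, rule_format, of u v x "f u"] by simp
  qed
  show False using bt unfolding between_def
  proof (elim disjE conjE)
    assume "x < y" "y < z" thus False using tc'[of x y z] zn e1 e2 by simp
  next
    assume "z < y" "y < x" thus False using tc'[of z y x] zn e1 e2 by simp
  qed
qed

lemma out_weight:
  assumes "proc_out n C w X"
    and dC: "dom C \<subseteq> path_vertices n"
  shows "(\<forall>v \<in> path_vertices n. 0 \<le> w v) \<Longrightarrow> supp n w \<subseteq> dom C \<Longrightarrow> is_cover n C Y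
     \<Longrightarrow> sum w X \<le> 3 * sum w Y"
  using assms(1)
proof (induction rule: proc_out.induct)
  case (out_done w)
  have "sum w (path_vertices n - supp n w) = 0"
    using out_done.prems(1) by (intro sum.neutral) (auto simp: supp_def less_le)
  moreover have "0 \<le> sum w Y"
    using out_done.prems(1,3) unfolding is_cover_def by (intro sum_nonneg) auto
  ultimately show ?case by simp
next
  case (out_step w w' X)
  obtain x y z where b: "bad_triple n (C |` supp n w) w x y z" and
    w': "w' = (\<lambda>v. if v \<in> {x, y, z} then w v - Min {w x, w y, w z} else w v)"
    using step_unfold[OF out_step.hyps(1)] by blast
  define e where "e = Min {w x, w y, w z}"
  define T where "T = {x, y, z}"
  have pos: "0 < w x" "0 < w y" "0 < w z" "x < n" "y < n" "z < n"
    and ins: "x \<in> supp n w" "y \<in> supp n w" "z \<in> supp n w"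
    using b unfolding bad_triple_def supp_def path_vertices_def by auto
  have epos: "0 < e" unfolding e_def using pos by (simp add: min_def)
  have r: "(C |` supp n w) x = C x" "(C |` supp n w) y = C y" "(C |` supp n w) z = C z"
    using ins by (simp_all add: restrict_in)
  have bb: "(C |` supp n w) x = (C |` supp n w) z" "(C |` supp n w) x \<noteq> (C |` supp n w) y" "between x y z"
    using b unfolding bad_triple_def by blast+
  have cc: "C x = C z" "C x \<noteq> C y" "between x y z"
    using bb r by simp_all
  have nn: "\<forall>v \<in> path_vertices n. 0 \<le> w' v"
    by (rule step_nonneg[OF out_step.hyps(1) out_step.prems(1)])
  have supp': "supp n w' \<subseteq> dom C"
    using step_supp[OF out_step.hyps(1)] out_step.prems(2) by blast
  have IH: "sum w' X \<le> 3 * sum w' Y"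
    by (rule out_step.IH[OF nn supp' out_step.prems(3)])
  have wdec: "w v = w' v + (if v \<in> T then e else 0)" for v
    unfolding w' T_def e_def by simp
  have Xfin: "finite X" using out_cover[OF out_step.hyps(2) dC] unfolding is_cover_def path_vertices_def
    using finite_subset by blast
  have Yfin: "finite Y" using out_step.prems(3) unfolding is_cover_def path_vertices_def
    using finite_subset by blast
  have sdec: "sum w A = sum w' A + real (card (A \<inter> T)) * e" if "finite A" for A
  proof -
    have "sum w A = sum w' A + sum (\<lambda>v. if v \<in> T then e else 0) A"
      by (simp add: wdec sum.distrib)
    also have "sum (\<lambda>v. if v \<in> T then e else 0) A = real (card (A \<inter> T)) * e"
      using that by (simp add: sum.If_cases Int_def)
    finally show ?thesis .
  qed
  have cT: "card (X \<inter> T) \<le> 3"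
  proof -
    have "card (X \<inter> T) \<le> card T" unfolding T_def by (intro card_mono) auto
    also have "card T \<le> 3" unfolding T_def by (simp add: card_insert_le_m1)
    finally show ?thesis .
  qed
  have dxyz: "x \<in> dom C" "y \<in> dom C" "z \<in> dom C" using ins out_step.prems(2) by blast+
  have "Y \<inter> T \<noteq> {}" unfolding T_def
    by (rule cover_hits[OF out_step.prems(3) dxyz cc pos(4) pos(6)])
  hence cY: "1 \<le> card (Y \<inter> T)" using Yfin by (simp add: Suc_le_eq card_gt_0_iff)
  have "sum w X \<le> sum w' X + 3 * e" using sdec[OF Xfin] cT epos
    by (simp add: mult_right_mono)
  also have "\<dots> \<le> 3 * sum w' Y + 3 * e" using IH by simp
  also have "\<dots> \<le> 3 * (sum w' Y + real (card (Y \<inter> T)) * e)"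
  proof -
    have "e \<le> real (card (Y \<inter> T)) * e" using cY epos
      by (metis mult_le_cancel_right1 of_nat_1 of_nat_le_iff less_le_not_le)
    thus ?thesis by simp
  qed
  also have "\<dots> = 3 * sum w Y" using sdec[OF Yfin] by simp
  finally show ?case .
qed

theorem mainTheorem5:
  fixes n :: nat and C :: "nat \<Rightarrow> 'c option" and w :: "nat \<Rightarrow> real"
  assumes nonneg: "\<forall>v \<in> path_vertices n. 0 \<le> w v"
    and domC: "dom C = supp n w"
  shows "(\<forall>w'. (proc_step n C)\<^sup>*\<^sup>* w w' \<longrightarrow>
             \<not> is_cover n (C |` supp n w') (path_vertices n - supp n w') \<longrightarrow>
             (\<exists>x y z. bad_triple n (C |` supp n w') w' x y z))
       \<and> \<not> (\<exists>f. f 0 = w \<and> (\<forall>i. proc_step n C (f i) (f (Suc i))))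
       \<and> (\<exists>X. proc_out n C w X)
       \<and> (\<forall>X. proc_out n C w X \<longrightarrow> is_cover n C X \<and> sum w X \<le> 3 * OPT n C w)"
proof (intro conjI)
  show "\<forall>w'. (proc_step n C)\<^sup>*\<^sup>* w w' \<longrightarrow>
             \<not> is_cover n (C |` supp n w') (path_vertices n - supp n w') \<longrightarrow>
             (\<exists>x y z. bad_triple n (C |` supp n w') w' x y z)"
    using nocover_bad by blast
  show "\<not> (\<exists>f. f 0 = w \<and> (\<forall>i. proc_step n C (f i) (f (Suc i))))"
  proof
    assume "\<exists>f. f 0 = w \<and> (\<forall>i. proc_step n C (f i) (f (Suc i)))"
    then obtain f where f: "\<forall>i. proc_step n C (f i) (f (Suc i))" by blast
    have lt: "card (supp n (f (Suc i))) < card (supp n (f i))" for i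
      by (rule psubset_card_mono[OF finite_supp step_supp[OF f[rule_format, of i]]])
    have "card (supp n (f i)) + i \<le> card (supp n (f 0))" for i
    proof (induction i)
      case (Suc i) then show ?case using lt[of i] by simp
    qed simp
    from this[of "Suc (card (supp n (f 0)))"] show False by simp
  qed
  show "\<exists>X. proc_out n C w X" by (rule exists_out)
  show "\<forall>X. proc_out n C w X \<longrightarrow> is_cover n C X \<and> sum w X \<le> 3 * OPT n C w"
  proof (intro allI impI conjI)
    fix X assume o: "proc_out n C w X"
    have dCV: "dom C \<subseteq> path_vertices n" using domC by (auto simp: supp_def)
    show "is_cover n C X" using out_cover[OF o dCV] .
    let ?S = "{Y. is_cover n C Y}"
    have fin: "finite ?S"
      by (rule finite_subset[of _ "Pow (path_vertices n)"])
         (auto simp: is_cover_def path_vertices_def)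
    have em: "dom (C |` (dom C - path_vertices n)) = {}" using dCV by auto
    have "convex_pc n (C |` (dom C - path_vertices n))"
      unfolding convex_pc_def total_convex_def
      by (rule exI[of _ "\<lambda>_. undefined"]) (use dCV in auto)
    hence "is_cover n C (path_vertices n)"
      unfolding is_cover_def by simp
    hence ne: "?S \<noteq> {}" by blast
    have "OPT n C w \<in> sum w ` ?S" unfolding OPT_def using fin ne by (intro Min_in) auto
    then obtain Y where Y: "is_cover n C Y" "OPT n C w = sum w Y" by auto
    show "sum w X \<le> 3 * OPT n C w"
      using out_weight[OF o dCV nonneg _ Y(1)] domC Y(2) by simp
  qed
qed

end
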